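(* Let $p\ge3$, $G\in\mathbb{Q}_p[\![x]\!]$, and let $M$ be the (finite) length of the slope $\le-1$ part of the Newton polygon of $G$. Suppose $M>1$ and $i\le M$ is an integer with $v(C_i(G))\le v(C_M(G))+v(M!/i!)$. Then $i\ge\kappa_p^{-1}M$.
   Context: $v$ is the $p$-adic valuation, $C_i(G)$ the $x^i$-coefficient of $G$. The Newton polygon of $G$ is the lower convex hull of the points $(i,v(C_i(G)))$ with $C_i(G)\ne0$; the slope $\le-1$ part is the initial portion consisting of segments of slope $\le -1$, and its length $M$ is the $x$-coordinate of its right endpoint (so $(M,v(C_M(G)))$ lies on the polygon and $v(C_i(G))\ge v(C_M(G))+(M-i)$ for all $i<M$). $\kappa_p=1+\frac{p-1}{p-2}\cdot\frac{1}{\log p}$. *)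

theory Defs
  imports "HOL-Analysis.Analysis" "HOL-Computational_Algebra.Computational_Algebra"
begin

text \<open>
  We model a power series
  G = sum C_i x^i as a formal power series over an arbitrary field 'a together with
  an arbitrary integer-valued function v on the nonzero coefficients (for Q_p this is
  the p-adic valuation; the value infinity of v(0) is handled by only looking at
  nonzero coefficients).  The statement only depends on the values v(C_i G), and every
  integer sequence is realised by p-adic valuations of Q_p-coefficients, so this
  covers the Q_p case.
\<close>

definition vfact_quot :: "nat \<Rightarrow> nat \<Rightarrow> nat \<Rightarrow> int" where
  "vfact_quot p M i = int (multiplicity p (fact M :: nat)) - int (multiplicity p (fact i :: nat))"

definition kappa :: "nat \<Rightarrow> real" where
  "kappa p = 1 + (real p - 1) / (real p - 2) * (1 / ln (real p))"

text \<open>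
  The Newton polygon of G is the lower convex hull of the points (i, v(C_i G)),
  C_i G \<noteq> 0.  Its slope \<le> -1 part ends at the rightmost point where the supporting
  line of slope -1 touches the polygon, i.e. at the largest index minimising
  v(C_i G) + i.  \<open>np_slope_le_m1_length v G M\<close> says that this part has finite
  length M: (M, v(C_M G)) is a point of the polygon with v(C_i G) \<ge> v(C_M G) + (M - i)
  for all i (in particular all i < M), and the polygon has slope > -1 after M.
\<close>
definition np_slope_le_m1_length :: "('a::zero \<Rightarrow> int) \<Rightarrow> 'a fps \<Rightarrow> nat \<Rightarrow> bool" where
  "np_slope_le_m1_length v G M \<longleftrightarrow>
     fps_nth G M \<noteq> 0 \<and>
     (\<forall>j. fps_nth G j \<noteq> 0 \<longrightarrow> v (fps_nth G M) + int M \<le> v (fps_nth G j) + int j) \<and>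
     (\<forall>j>M. fps_nth G j \<noteq> 0 \<longrightarrow> v (fps_nth G M) + int M < v (fps_nth G j) + int j)"

end

theory Submission
  imports Defs
begin

lemma mult_fact_rec:
  assumes p: "prime (p::nat)"
  shows "multiplicity p (fact n :: nat) = n div p + multiplicity p (fact (n div p) :: nat)"
proof (induction n)
  case 0
  then show ?case by simp
next
  case (Suc n)
  have p1: "p > 1" using p prime_gt_1_nat by blast
  have split: "multiplicity p (fact (Suc n) :: nat) = multiplicity p (Suc n) + multiplicity p (fact n :: nat)"
    unfolding fact_Suc of_nat_id
    by (rule prime_elem_multiplicity_mult_distrib) (auto simp: p prime_imp_prime_elem)
  show ?case
  proof (cases "p dvd Suc n")
    case False
    then have "multiplicity p (Suc n) = 0" by (simp add: not_dvd_imp_multiplicity_0)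
    moreover have "Suc n div p = n div p"
      using False p1 by (metis Suc_eq_plus1 div_add1_eq dvd_eq_mod_eq_0 add.commute div_Suc)
    ultimately show ?thesis using split Suc.IH by simp
  next
    case True
    then obtain q where q: "Suc n = p * q" by blast
    have qpos: "q > 0" using q by (cases q) auto
    have d1: "Suc n div p = q" using q p1 by simp
    have d2: "n div p = q - 1"
    proof -
      have "n = (p - 1) + (q - 1) * p" using q qpos p1
        by (cases q) (auto simp: algebra_simps)
      then have "n div p = ((p - 1) + (q - 1) * p) div p" by simp
      also have "\<dots> = (q - 1) + (p - 1) div p" using p1 by (intro div_mult_self1) simp
      also have "(p - 1) div p = 0" using p1 by simp
      finally show ?thesis by simp
    qed
    have m1: "multiplicity p (Suc n) = Suc (multiplicity p q)"
      using q qpos p1 by (simp add: multiplicity_times_same p prime_gt_0_nat)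
    have m2: "multiplicity p (fact q :: nat) = multiplicity p q + multiplicity p (fact (q - 1) :: nat)"
    proof (cases q)
      case (Suc k)
      have "multiplicity p (Suc k * fact k) = multiplicity p (Suc k) + multiplicity p (fact k :: nat)"
        by (rule prime_elem_multiplicity_mult_distrib) (auto simp: p prime_imp_prime_elem)
      then show ?thesis unfolding Suc fact_Suc of_nat_id by simp
    qed (use qpos in simp)
    show ?thesis using split Suc.IH d1 d2 m1 m2 qpos by simp
  qed
qed

lemma mult_fact_bound:
  assumes p: "prime (p::nat)" and "n \<ge> 1"
  shows "(p - 1) * multiplicity p (fact n :: nat) \<le> n - 1"
  using assms(2)
proof (induction n rule: less_induct)
  case (less n)
  have p1: "p > 1" using p prime_gt_1_nat by blast
  define q where "q = n div p"
  have rec: "multiplicity p (fact n :: nat) = q + multiplicity p (fact q :: nat)"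
    unfolding q_def by (rule mult_fact_rec[OF p])
  show ?case
  proof (cases "q = 0")
    case True
    then show ?thesis using rec by simp
  next
    case False
    have qn: "q < n" using p1 less.prems q_def by simp
    have IH: "(p - 1) * multiplicity p (fact q :: nat) \<le> q - 1" using less.IH[OF qn] False by simp
    have pq: "p * q \<le> n" using q_def by simp
    have "(p - 1) * multiplicity p (fact n :: nat) = (p-1)*q + (p - 1) * multiplicity p (fact q :: nat)"
      using rec by (simp add: algebra_simps)
    also have "\<dots> \<le> (p-1)*q + (q - 1)" using IH by simp
    also have "\<dots> = p*q - 1" using False p1 by (cases p) (auto simp: algebra_simps)
    also have "\<dots> \<le> n - 1" using pq by simp
    finally show ?thesis .
  qed
qed

theorem mainTheorem9:
  fixes p :: nat and G :: "'a::field fps" and v :: "'a \<Rightarrow> int" and M i :: nat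
  assumes "prime p" and "p \<ge> 3"
    and "np_slope_le_m1_length v G M"
    and "M > 1"
    and "i \<le> M"
    and "fps_nth G i \<noteq> 0"
    and "v (fps_nth G i) \<le> v (fps_nth G M) + vfact_quot p M i"
  shows "real i \<ge> real M / kappa p"
proof -
  have A: "v (fps_nth G M) + int M \<le> v (fps_nth G i) + int i"
    using assms(3,6) unfolding np_slope_le_m1_length_def by blast
  have B: "int M - int i \<le> int (multiplicity p (fact M :: nat))"
    using A assms(7) unfolding vfact_quot_def by linarith
  have C: "(p - 1) * multiplicity p (fact M :: nat) \<le> M - 1"
    using mult_fact_bound[OF assms(1)] assms(4) by simp
  define m where "m = multiplicity p (fact M :: nat)"
  have C1: "real ((p - 1) * m) \<le> real (M - 1)"
    using C unfolding m_def by (simp only: of_nat_le_iff)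
  have e1: "real ((p - 1) * m) = (real p - 1) * real m"
    using assms(2) by (simp add: of_nat_diff)
  have e2: "real (M - 1) = real M - 1"
    using assms(4) by (simp add: of_nat_diff)
  have C': "(real p - 1) * real m \<le> real M - 1"
    using C1 e1 e2 by linarith
  have B': "real M - real i \<le> real m"
    using B unfolding m_def by linarith
  have p3: "real p \<ge> 3" using assms(2) by simp
  have D0: "(real p - 1) * (real M - real i) \<le> (real p - 1) * real m"
    using B' p3 by (intro mult_left_mono) auto
  have D: "(real p - 1) * (real M - real i) \<le> real M - 1"
    using D0 C' by linarith
  have E: "(real p - 2) * real M \<le> (real p - 1) * real i"
    using D by (simp add: algebra_simps)
  have lnp: "ln (real p) \<le> real p - 1" using ln_le_minus_one p3 by simp
  have lnpos: "ln (real p) > 0" using p3 by simp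
  define L where "L = ln (real p)"
  have k: "kappa p = 1 + (real p - 1) / (real p - 2) * (1 / L)"
    unfolding kappa_def L_def by simp
  have q1: "(real p - 1) / L \<ge> 1" using lnp lnpos unfolding L_def by simp
  have k2: "(real p - 2) * kappa p = (real p - 2) + (real p - 1) / L"
  proof -
    have "(real p - 2) * ((real p - 1) / (real p - 2) * (1 / L)) = (real p - 1) / L"
      using p3 by simp
    thus ?thesis unfolding k by (simp add: distrib_left)
  qed
  have F: "(real p - 1) \<le> (real p - 2) * kappa p" using k2 q1 by linarith
  have kp: "kappa p > 0"
  proof -
    have "(real p - 2) * kappa p > 0" using F p3 by linarith
    thus ?thesis using p3 by (simp add: zero_less_mult_iff)
  qed
  have G1: "(real p - 1) * real i \<le> ((real p - 2) * kappa p) * real i"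
    using F by (intro mult_right_mono) auto
  have "(real p - 2) * real M \<le> (real p - 2) * (kappa p * real i)"
    using E G1 by (simp add: mult.assoc)
  hence "real M \<le> kappa p * real i" using p3 by simp
  thus ?thesis using kp by (simp add: divide_le_eq mult.commute)
qed

end
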